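(* Let $W$ be a (1-safe) DAW-net and $\mathrm{pddl}(W)$ its encoding into a planning domain with transition function $\gamma$. Then: (1) if $(M,\eta)\xrightarrow{t}(M',\eta')$ is a valid firing of $W$, then there is a ground action $a_t$ of $\alpha_t$ such that $(\Psi(M,\eta),a_t,\Psi(M',\eta'))\in\gamma$ (i.e. $\gamma(\Psi(M,\eta),a_t)$ is defined and equals $\Psi(M',\eta')$); (2) if there is a ground action $a_t$ of $\alpha_t$ with $(s,a_t,s')\in\gamma$, then $\Psi^{-1}(s)\xrightarrow{t}\Psi^{-1}(s')$ is a valid firing of $W$.
   Context: **Data model and guards.** $\mathcal{D}=(\mathcal{V},\Delta,\mathrm{dm},\mathrm{ord})$: variables $\mathcal{V}$; domains $\Delta_i$ (not necessarily disjoint), $\mathrm{dm}$ total surjective assigning each variable its finite domain; $\mathrm{ord}$ partial, giving partial orders $\le_{\Delta_i}$ on some domains. Assignments: partial functions $\eta$ with $\eta(v)\in\mathrm{dm}(v)$. Guards $\Phi::=\mathit{true}\mid\mathrm{def}(v)\mid t_1=t_2\mid t_1\le t_2\mid\neg\Phi\mid\Phi\wedge\Phi$, $t_i\in\mathcal{V}\cup\bigcup_i\Delta_i$; with $t[\eta]=\eta(t)$ for variables on which $\eta$ is defined and $t$ otherwise: $\mathrm{def}(v)$ iff $\eta(v)$ defined; $t_1=t_2$ iff $t_1[\eta],t_2[\eta]$ are equal constants; $t_1\le t_2$ iff both lie in some $\Delta_i$ with $\mathrm{ord}(\Delta_i)$ defined and $t_1[\eta]\le_{\Delta_i}t_2[\eta]$.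 **DAW-nets.** $W=\langle\mathcal{D},(P,T,F),\mathrm{wr},\mathrm{gd}\rangle$: workflow Petri net with places $\mathit{start},\mathit{sink}$, presets ${}^\bullet t$, postsets $t^\bullet$; $\mathrm{wr}(t)$ a partial function from $\mathcal{V}$ with $\mathrm{wr}(t)(v)\subseteq\mathrm{dm}(v)$; $\mathrm{gd}(t)$ a guard. A firing $(M,\eta)\xrightarrow{t}(M',\eta')$ is valid iff $\{p\mid M(p)>0\}\supseteq{}^\bullet t$; $\mathcal{D},\eta\models\mathrm{gd}(t)$; $M'(p)=M(p)-1$ on ${}^\bullet t\setminus t^\bullet$, $M(p)+1$ on $t^\bullet\setminus{}^\bullet t$, else $M(p)$; $\mathrm{dom}(\eta')=\mathrm{dom}(\eta)\cup\{v\mid\mathrm{wr}(t)(v)\ne\emptyset\}\setminus\{v\mid\mathrm{wr}(t)(v)=\emptyset\}$, $\eta'(v)\in\mathrm{wr}(t)(v)$ for $v\in\mathrm{dom}(\mathrm{wr}(t))$, else $\eta'(v)=\eta(v)$. Standing restriction: $W$ is 1-safe, so markings take values in $\{0,1\}$; $\mathcal{V}'$ is the finite set of variables appearing in $W$, and states have $\mathrm{dom}(\eta)\subseteq\mathcal{V}'$. **State-variable planning.** A state assigns each state variable a value in its range. Preconditions are Boolean combinations of $\mathrm{true}$, atoms $r(z_1,\dots,z_n)$ for rigid relations $r$, and $z_1=z_2$, with $z_j$ constants, parameters or state variables (state variables evaluated in the current state). An action template $\alpha$ has head $\mathit{act}(z_1,\dots,z_k)$ with parameters over finite ranges, precondition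 $\mathrm{pre}(\alpha)$, effects $\mathrm{eff}(\alpha)$ (assignments $v\leftarrow z$); ground actions substitute constants for parameters. $\gamma(s,a)$ is defined iff $\mathrm{pre}(a)$ holds in $s$, and then $\gamma(s,a)=\{(v,w)\mid v\leftarrow w\in\mathrm{eff}(a)\}\cup\{(v,w)\in s\mid v$ not assigned in $\mathrm{eff}(a)\}$; write $(s,a,s')\in\gamma$ for $\gamma(s,a)=s'$. **Encoding $\mathrm{pddl}(W)$.** State variables: $v\in\mathcal{V}'$ with range $\mathrm{dm}(v)\cup\{\mathrm{null}\}$; Boolean $p\in P$. Rigid relations: $\mathrm{ord}=\bigcup_i\{(o,o')\in\Delta_i^2\mid o\le_{\Delta_i}o'\}$; for $t\in T$, $v\in\mathrm{dom}(\mathrm{wr}(t))$: $wr_{t,v}=\mathrm{wr}(t)(v)$ if nonempty, $\{\mathrm{null}\}$ otherwise. Guard translation: $[\mathit{true}]=\mathrm{true}$, $[\mathrm{def}(v)]=\neg(v=\mathrm{null})$, $[v=t_2]=\neg(v=\mathrm{null})\wedge(v=t_2)$, $[t_1\le t_2]=\mathrm{ord}(t_1,t_2)$, $[\neg\Phi]=\neg[\Phi]$, $[\Phi_1\wedge\Phi_2]=[\Phi_1]\wedge[\Phi_2]$. For $t\in T$ with $\mathrm{dom}(\mathrm{wr}(t))=\{v_1,\dots,v_k\}$, template $\alpha_t$: head $t(z_{v_1},\dots,z_{v_k})$; precondition $[\mathrm{gd}(t)]\wedge\bigwedge_i wr_{t,v_i}(z_{v_i})\wedge\bigwedge_{p\in{}^\bullet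 t}(p=\mathrm{true})$; effects $v_i\leftarrow z_{v_i}$, $p\leftarrow\mathrm{false}$ for $p\in{}^\bullet t\setminus t^\bullet$, $p\leftarrow\mathrm{true}$ for $p\in t^\bullet$. **Mapping.** $\Psi(M,\eta)$ maps $v\mapsto\eta(v)$ if defined and $v\mapsto\mathrm{null}$ otherwise ($v\in\mathcal{V}'$), and $p\mapsto\mathrm{true}$ if $M(p)>0$, $p\mapsto\mathrm{false}$ if $M(p)=0$. Under 1-safety $\Psi$ is a bijection between states of $W$ and planning states; $\Psi^{-1}$ is its inverse. *)

theory Defs
  imports Main
begin

record ('v,'c) datamodel =
  dvars :: "'v set"
  ddoms :: "'c set set"
  ddm   :: "'v \<Rightarrow> 'c set"
  dord  :: "'c set \<Rightarrow> 'c rel option"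

definition wf_datamodel :: "('v,'c) datamodel \<Rightarrow> bool" where
  "wf_datamodel D \<longleftrightarrow>
     ddm D ` dvars D = ddoms D \<and>
     (\<forall>A\<in>ddoms D. finite A) \<and>
     (\<forall>A R. dord D A = Some R \<longrightarrow>
        A \<in> ddoms D \<and> R \<subseteq> A \<times> A \<and> refl_on A R \<and> antisym R \<and> trans R)"

datatype ('v,'c) gterm = Var 'v | Const 'c

datatype ('v,'c) guard =
    GTrue
  | GDef 'v
  | GEq "('v,'c) gterm" "('v,'c) gterm"
  | GLe "('v,'c) gterm" "('v,'c) gterm"
  | GNot "('v,'c) guard"
  | GAnd "('v,'c) guard" "('v,'c) guard"

(* t[eta]: the constant value if t is a constant or a defined variable; None means
   t[eta] is the (undefined) variable itself, i.e. not a constant *)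
fun tval :: "('v \<rightharpoonup> 'c) \<Rightarrow> ('v,'c) gterm \<Rightarrow> 'c option" where
  "tval \<eta> (Var v) = \<eta> v"
| "tval \<eta> (Const c) = Some c"

fun gholds :: "('v,'c) datamodel \<Rightarrow> ('v \<rightharpoonup> 'c) \<Rightarrow> ('v,'c) guard \<Rightarrow> bool" where
  "gholds D \<eta> GTrue = True"
| "gholds D \<eta> (GDef v) = (\<eta> v \<noteq> None)"
| "gholds D \<eta> (GEq t1 t2) = (\<exists>c1 c2. tval \<eta> t1 = Some c1 \<and> tval \<eta> t2 = Some c2 \<and> c1 = c2)"
| "gholds D \<eta> (GLe t1 t2) = (\<exists>c1 c2 A R. tval \<eta> t1 = Some c1 \<and> tval \<eta> t2 = Some c2 \<and>
      A \<in> ddoms D \<and> dord D A = Some R \<and> c1 \<in> A \<and> c2 \<in> A \<and> (c1, c2) \<in> R)"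
| "gholds D \<eta> (GNot g) = (\<not> gholds D \<eta> g)"
| "gholds D \<eta> (GAnd g1 g2) = (gholds D \<eta> g1 \<and> gholds D \<eta> g2)"

fun tvars :: "('v,'c) gterm \<Rightarrow> 'v set" where
  "tvars (Var v) = {v}" | "tvars (Const c) = {}"

fun gvars :: "('v,'c) guard \<Rightarrow> 'v set" where
  "gvars GTrue = {}"
| "gvars (GDef v) = {v}"
| "gvars (GEq t1 t2) = tvars t1 \<union> tvars t2"
| "gvars (GLe t1 t2) = tvars t1 \<union> tvars t2"
| "gvars (GNot g) = gvars g"
| "gvars (GAnd g1 g2) = gvars g1 \<union> gvars g2"

record ('v,'c,'p,'t) dawnet =
  dmod   :: "('v,'c) datamodel"
  places :: "'p set"
  trans  :: "'t set"
  flow_in  :: "('p \<times> 't) set"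
  flow_out :: "('t \<times> 'p) set"
  pstart :: 'p
  psink  :: 'p
  wr :: "'t \<Rightarrow> 'v \<rightharpoonup> 'c set"
  gd :: "'t \<Rightarrow> ('v,'c) guard"

definition preset :: "('v,'c,'p,'t) dawnet \<Rightarrow> 't \<Rightarrow> 'p set" where
  "preset W t = {p. (p, t) \<in> flow_in W}"

definition postset :: "('v,'c,'p,'t) dawnet \<Rightarrow> 't \<Rightarrow> 'p set" where
  "postset W t = {p. (t, p) \<in> flow_out W}"

definition net_edges :: "('v,'c,'p,'t) dawnet \<Rightarrow> ('p + 't) rel" where
  "net_edges W = {(Inl p, Inr t) | p t. (p, t) \<in> flow_in W} \<union> {(Inr t, Inl p) | t p. (t, p) \<in> flow_out W}"

definition workflow_net :: "('v,'c,'p,'t) dawnet \<Rightarrow> bool" where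
  "workflow_net W \<longleftrightarrow>
     finite (places W) \<and> finite (trans W) \<and>
     flow_in W \<subseteq> places W \<times> trans W \<and> flow_out W \<subseteq> trans W \<times> places W \<and>
     pstart W \<in> places W \<and> psink W \<in> places W \<and>
     (\<forall>t. (t, pstart W) \<notin> flow_out W) \<and> (\<forall>t. (psink W, t) \<notin> flow_in W) \<and>
     (\<forall>n \<in> Inl ` places W \<union> Inr ` trans W.
        (Inl (pstart W), n) \<in> (net_edges W)\<^sup>* \<and> (n, Inl (psink W)) \<in> (net_edges W)\<^sup>*)"

definition daw_net :: "('v,'c,'p,'t) dawnet \<Rightarrow> bool" where
  "daw_net W \<longleftrightarrow> wf_datamodel (dmod W) \<and> workflow_net W \<and>
     (\<forall>t v S. wr W t v = Some S \<longrightarrow> v \<in> dvars (dmod W) \<and> S \<subseteq> ddm (dmod W) v) \<and>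
     (\<forall>t. finite (dom (wr W t))) \<and>
     (\<forall>t. gvars (gd W t) \<subseteq> dvars (dmod W))"

definition netvars :: "('v,'c,'p,'t) dawnet \<Rightarrow> 'v set" where
  "netvars W = (\<Union>t\<in>trans W. dom (wr W t) \<union> gvars (gd W t))"

type_synonym ('p,'v,'c) nstate = "('p \<Rightarrow> nat) \<times> ('v \<rightharpoonup> 'c)"

definition valid_firing :: "('v,'c,'p,'t) dawnet \<Rightarrow> ('p,'v,'c) nstate \<Rightarrow> 't \<Rightarrow> ('p,'v,'c) nstate \<Rightarrow> bool" where
  "valid_firing W st t st' \<longleftrightarrow> (case st of (M, \<eta>) \<Rightarrow> case st' of (M', \<eta>') \<Rightarrow>
     t \<in> trans W \<and>
     preset W t \<subseteq> {p. M p > 0} \<and>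
     gholds (dmod W) \<eta> (gd W t) \<and>
     (\<forall>p. M' p = (if p \<in> preset W t - postset W t then M p - 1
                  else if p \<in> postset W t - preset W t then M p + 1 else M p)) \<and>
     (\<forall>v. case wr W t v of
            None \<Rightarrow> \<eta>' v = \<eta> v
          | Some S \<Rightarrow> (if S = {} then \<eta>' v = None else (\<exists>c\<in>S. \<eta>' v = Some c))))"

definition initial_state :: "('v,'c,'p,'t) dawnet \<Rightarrow> ('p,'v,'c) nstate" where
  "initial_state W = ((\<lambda>p. if p = pstart W then 1 else 0), Map.empty)"

definition reachable :: "('v,'c,'p,'t) dawnet \<Rightarrow> ('p,'v,'c) nstate \<Rightarrow> bool" where
  "reachable W st \<longleftrightarrow> (\<lambda>x y. \<exists>t. valid_firing W x t y)\<^sup>*\<^sup>* (initial_state W) st"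

definition one_safe :: "('v,'c,'p,'t) dawnet \<Rightarrow> bool" where
  "one_safe W \<longleftrightarrow> (\<forall>M \<eta>. reachable W (M, \<eta>) \<longrightarrow> (\<forall>p. M p \<le> 1))"

definition net_state :: "('v,'c,'p,'t) dawnet \<Rightarrow> ('p,'v,'c) nstate \<Rightarrow> bool" where
  "net_state W st \<longleftrightarrow> (\<forall>p. fst st p \<le> 1) \<and> dom (snd st) \<subseteq> netvars W"

datatype ('sv,'val,'par) pterm = PCst 'val | PPar 'par | PSv 'sv

datatype ('r,'sv,'val,'par) pform =
    PTrue
  | PRel 'r "('sv,'val,'par) pterm list"
  | PEq "('sv,'val,'par) pterm" "('sv,'val,'par) pterm"
  | PNot "('r,'sv,'val,'par) pform"
  | PAnd "('r,'sv,'val,'par) pform" "('r,'sv,'val,'par) pform"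

record ('n,'r,'sv,'val,'par) template =
  a_name   :: 'n
  a_params :: "'par set"
  a_range  :: "'par \<Rightarrow> 'val set"
  a_pre    :: "('r,'sv,'val,'par) pform"
  a_eff    :: "'sv \<rightharpoonup> ('sv,'val,'par) pterm"

record ('n,'r,'sv,'val,'par) gaction =
  g_head :: "'n \<times> ('par \<rightharpoonup> 'val)"
  g_pre  :: "('r,'sv,'val,'par) pform"
  g_eff  :: "'sv \<rightharpoonup> ('sv,'val,'par) pterm"

fun subst_term :: "('par \<Rightarrow> 'val) \<Rightarrow> ('sv,'val,'par) pterm \<Rightarrow> ('sv,'val,'par) pterm" where
  "subst_term \<sigma> (PPar z) = PCst (\<sigma> z)"
| "subst_term \<sigma> x = x"

fun subst_form :: "('par \<Rightarrow> 'val) \<Rightarrow> ('r,'sv,'val,'par) pform \<Rightarrow> ('r,'sv,'val,'par) pform" where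
  "subst_form \<sigma> PTrue = PTrue"
| "subst_form \<sigma> (PRel r ts) = PRel r (map (subst_term \<sigma>) ts)"
| "subst_form \<sigma> (PEq a b) = PEq (subst_term \<sigma> a) (subst_term \<sigma> b)"
| "subst_form \<sigma> (PNot f) = PNot (subst_form \<sigma> f)"
| "subst_form \<sigma> (PAnd f g) = PAnd (subst_form \<sigma> f) (subst_form \<sigma> g)"

definition ground :: "('n,'r,'sv,'val,'par) template \<Rightarrow> ('par \<Rightarrow> 'val) \<Rightarrow> ('n,'r,'sv,'val,'par) gaction" where
  "ground \<alpha> \<sigma> = \<lparr> g_head = (a_name \<alpha>, (Some \<circ> \<sigma>) |` a_params \<alpha>),
                   g_pre = subst_form \<sigma> (a_pre \<alpha>),
                   g_eff = map_option (subst_term \<sigma>) \<circ> a_eff \<alpha> \<rparr>"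

definition ground_action_of :: "('n,'r,'sv,'val,'par) template \<Rightarrow> ('n,'r,'sv,'val,'par) gaction \<Rightarrow> bool" where
  "ground_action_of \<alpha> a \<longleftrightarrow> (\<exists>\<sigma>. (\<forall>z\<in>a_params \<alpha>. \<sigma> z \<in> a_range \<alpha> z) \<and> a = ground \<alpha> \<sigma>)"

fun peval :: "('sv \<rightharpoonup> 'val) \<Rightarrow> ('sv,'val,'par) pterm \<Rightarrow> 'val option" where
  "peval s (PCst c) = Some c"
| "peval s (PSv x) = s x"
| "peval s (PPar z) = None"

fun pholds :: "('r \<Rightarrow> 'val list set) \<Rightarrow> ('sv \<rightharpoonup> 'val) \<Rightarrow> ('r,'sv,'val,'par) pform \<Rightarrow> bool" where
  "pholds I s PTrue = True"
| "pholds I s (PRel r ts) = (\<exists>cs. map (peval s) ts = map Some cs \<and> cs \<in> I r)"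
| "pholds I s (PEq a b) = (\<exists>c. peval s a = Some c \<and> peval s b = Some c)"
| "pholds I s (PNot f) = (\<not> pholds I s f)"
| "pholds I s (PAnd f g) = (pholds I s f \<and> pholds I s g)"

definition gamma :: "('r \<Rightarrow> 'val list set) \<Rightarrow> ('sv \<rightharpoonup> 'val) \<Rightarrow> ('n,'r,'sv,'val,'par) gaction \<Rightarrow> ('sv \<rightharpoonup> 'val) option" where
  "gamma I s a = (if pholds I s (g_pre a)
                  then Some (\<lambda>x. case g_eff a x of Some z \<Rightarrow> peval s z | None \<Rightarrow> s x)
                  else None)"

datatype ('v,'p) svar = SV 'v | SP 'p
datatype 'c pval = Val 'c | Null | Bool bool
datatype ('t,'v) rname = ROrd | RWr 't 'v

definition list_of :: "'a set \<Rightarrow> 'a list" where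
  "list_of A = (SOME xs. set xs = A)"

definition PConj :: "('r,'sv,'val,'par) pform list \<Rightarrow> ('r,'sv,'val,'par) pform" where
  "PConj fs = foldr PAnd fs PTrue"

fun enc_term :: "('v,'c) gterm \<Rightarrow> (('v,'p) svar, 'c pval, 'v) pterm" where
  "enc_term (Var v) = PSv (SV v)"
| "enc_term (Const c) = PCst (Val c)"

fun enc_guard :: "('v,'c) guard \<Rightarrow> (('t,'v) rname, ('v,'p) svar, 'c pval, 'v) pform" where
  "enc_guard GTrue = PTrue"
| "enc_guard (GDef v) = PNot (PEq (PSv (SV v)) (PCst Null))"
| "enc_guard (GEq t1 t2) = PAnd (PNot (PEq (enc_term t1) (PCst Null))) (PEq (enc_term t1) (enc_term t2))"
| "enc_guard (GLe t1 t2) = PRel ROrd [enc_term t1, enc_term t2]"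
| "enc_guard (GNot g) = PNot (enc_guard g)"
| "enc_guard (GAnd g1 g2) = PAnd (enc_guard g1) (enc_guard g2)"

definition rigid :: "('v,'c,'p,'t) dawnet \<Rightarrow> ('t,'v) rname \<Rightarrow> 'c pval list set" where
  "rigid W r = (case r of
      ROrd \<Rightarrow> {[Val o1, Val o2] | o1 o2. \<exists>A R. A \<in> ddoms (dmod W) \<and> dord (dmod W) A = Some R \<and>
                                              o1 \<in> A \<and> o2 \<in> A \<and> (o1, o2) \<in> R}
    | RWr t v \<Rightarrow> (case wr W t v of
                   None \<Rightarrow> {}
                 | Some S \<Rightarrow> (if S = {} then {[Null]} else {[Val c] | c. c \<in> S})))"

definition alpha :: "('v,'c,'p,'t) dawnet \<Rightarrow> 't \<Rightarrow> ('t, ('t,'v) rname, ('v,'p) svar, 'c pval, 'v) template" where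
  "alpha W t = \<lparr> a_name = t,
      a_params = dom (wr W t),
      a_range = (\<lambda>v. Val ` ddm (dmod W) v \<union> {Null}),
      a_pre = PAnd (enc_guard (gd W t))
               (PAnd (PConj (map (\<lambda>v. PRel (RWr t v) [PPar v]) (list_of (dom (wr W t)))))
                     (PConj (map (\<lambda>p. PEq (PSv (SP p)) (PCst (Bool True))) (list_of (preset W t))))),
      a_eff = (\<lambda>x. case x of
                 SV v \<Rightarrow> (if v \<in> dom (wr W t) then Some (PPar v) else None)
               | SP p \<Rightarrow> (if p \<in> postset W t then Some (PCst (Bool True))
                          else if p \<in> preset W t then Some (PCst (Bool False)) else None)) \<rparr>"

definition planning_state :: "('v,'c,'p,'t) dawnet \<Rightarrow> (('v,'p) svar \<rightharpoonup> 'c pval) \<Rightarrow> bool" where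
  "planning_state W s \<longleftrightarrow>
     dom s = SV ` netvars W \<union> SP ` places W \<and>
     (\<forall>v\<in>netvars W. \<exists>x\<in>Val ` ddm (dmod W) v \<union> {Null}. s (SV v) = Some x) \<and>
     (\<forall>p\<in>places W. \<exists>b. s (SP p) = Some (Bool b))"

definition Psi :: "('v,'c,'p,'t) dawnet \<Rightarrow> ('p,'v,'c) nstate \<Rightarrow> (('v,'p) svar \<rightharpoonup> 'c pval)" where
  "Psi W st = (\<lambda>x. case x of
      SV v \<Rightarrow> (if v \<in> netvars W then Some (case snd st v of Some c \<Rightarrow> Val c | None \<Rightarrow> Null) else None)
    | SP p \<Rightarrow> (if p \<in> places W then Some (Bool (fst st p > 0)) else None))"

definition Psi_inv :: "(('v,'p) svar \<rightharpoonup> 'c pval) \<Rightarrow> ('p,'v,'c) nstate" where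
  "Psi_inv s = ((\<lambda>p. if s (SP p) = Some (Bool True) then 1 else 0),
                (\<lambda>v. case s (SV v) of Some (Val c) \<Rightarrow> Some c | _ \<Rightarrow> None))"

end

theory Submission
  imports Defs
begin

lemma list_of_set: "finite A \<Longrightarrow> set (list_of A) = A"
  unfolding list_of_def by (metis (mono_tags, lifting) finite_list someI_ex)

lemma subst_PConj: "subst_form \<sigma> (PConj fs) = PConj (map (subst_form \<sigma>) fs)"
  unfolding PConj_def by (induction fs) auto

lemma pholds_PConj: "pholds I s (PConj fs) = (\<forall>f\<in>set fs. pholds I s f)"
  unfolding PConj_def by (induction fs) auto

lemma subst_enc_term: "subst_term \<sigma> (enc_term t) = enc_term t"
  by (cases t) auto

lemma subst_enc_guard: "subst_form \<sigma> (enc_guard g) = enc_guard g"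
  by (induction g) (auto simp: subst_enc_term)

lemma peval_enc_term:
  assumes "\<forall>v\<in>tvars t. s (SV v) = Some (case \<eta> v of Some c \<Rightarrow> Val c | None \<Rightarrow> Null)"
  shows "peval s (enc_term t) = Some (case tval \<eta> t of Some c \<Rightarrow> Val c | None \<Rightarrow> Null)"
  using assms by (cases t) auto

lemma enc_guard_correct:
  assumes "\<forall>v\<in>gvars g. s (SV v) = Some (case \<eta> v of Some c \<Rightarrow> Val c | None \<Rightarrow> Null)"
    and "I ROrd = rigid W ROrd"
  shows "pholds I s (enc_guard g) = gholds (dmod W) \<eta> g"
  using assms(1)
proof (induction g)
  case (GDef v)
  then show ?case by (auto split: option.splits)
next
  case (GEq t1 t2)
  have e1: "peval s (enc_term t1) = Some (case tval \<eta> t1 of Some c \<Rightarrow> Val c | None \<Rightarrow> Null)"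
    using GEq by (intro peval_enc_term) auto
  have e2: "peval s (enc_term t2) = Some (case tval \<eta> t2 of Some c \<Rightarrow> Val c | None \<Rightarrow> Null)"
    using GEq by (intro peval_enc_term) auto
  show ?case using e1 e2 by (auto split: option.splits)
next
  case (GLe t1 t2)
  have e1: "peval s (enc_term t1) = Some (case tval \<eta> t1 of Some c \<Rightarrow> Val c | None \<Rightarrow> Null)"
    using GLe by (intro peval_enc_term) auto
  have e2: "peval s (enc_term t2) = Some (case tval \<eta> t2 of Some c \<Rightarrow> Val c | None \<Rightarrow> Null)"
    using GLe by (intro peval_enc_term) auto
  have m: "\<And>a b. map (peval s) [enc_term t1, enc_term t2] = map Some [a, b] \<longleftrightarrow>
     peval s (enc_term t1) = Some a \<and> peval s (enc_term t2) = Some b" by auto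
  show ?case
  proof
    assume "pholds I s (enc_guard (GLe t1 t2))"
    then obtain cs where "map (peval s) [enc_term t1, enc_term t2] = map Some cs" "cs \<in> rigid W ROrd"
      using assms(2) by (simp del: list.map) blast
    then show "gholds (dmod W) \<eta> (GLe t1 t2)" using e1 e2
      by (auto simp: rigid_def split: option.splits)
  next
    assume "gholds (dmod W) \<eta> (GLe t1 t2)"
    then obtain c1 c2 A R where h: "tval \<eta> t1 = Some c1" "tval \<eta> t2 = Some c2"
      "A \<in> ddoms (dmod W)" "dord (dmod W) A = Some R" "c1 \<in> A" "c2 \<in> A" "(c1, c2) \<in> R" by auto
    have "[Val c1, Val c2] \<in> rigid W ROrd" unfolding rigid_def rname.case using h(3-7) by blast
    moreover have "map (peval s) [enc_term t1, enc_term t2] = map Some [Val c1, Val c2]"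
      using e1 e2 h(1,2) by simp
    ultimately show "pholds I s (enc_guard (GLe t1 t2))" using assms(2)
      by (simp del: list.map)
  qed
qed auto

lemma basic_facts:
  assumes "daw_net W" "t \<in> trans W"
  shows "finite (dom (wr W t))" "finite (preset W t)" "preset W t \<subseteq> places W"
    "postset W t \<subseteq> places W" "dom (wr W t) \<subseteq> netvars W" "gvars (gd W t) \<subseteq> netvars W"
proof -
  have wf: "workflow_net W" using assms by (simp add: daw_net_def)
  show "finite (dom (wr W t))" using assms by (simp add: daw_net_def)
  show pp: "preset W t \<subseteq> places W" using wf by (auto simp: workflow_net_def preset_def)
  show "finite (preset W t)" using wf pp finite_subset by (auto simp: workflow_net_def)
  show "postset W t \<subseteq> places W" using wf by (auto simp: workflow_net_def postset_def)
  show "dom (wr W t) \<subseteq> netvars W" "gvars (gd W t) \<subseteq> netvars W"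
    using assms(2) by (auto simp: netvars_def)
qed

lemma part1:
  assumes dw: "daw_net W" and ns: "net_state W (M, \<eta>)" and vf: "valid_firing W (M, \<eta>) t (M', \<eta>')"
  shows "\<exists>a. ground_action_of (alpha W t) a \<and> gamma (rigid W) (Psi W (M, \<eta>)) a = Some (Psi W (M', \<eta>'))"
proof -
  have tT: "t \<in> trans W" and pre: "preset W t \<subseteq> {p. M p > 0}"
    and g: "gholds (dmod W) \<eta> (gd W t)"
    and mk: "\<And>p. M' p = (if p \<in> preset W t - postset W t then M p - 1
                  else if p \<in> postset W t - preset W t then M p + 1 else M p)"
    and wv: "\<And>v. case wr W t v of
            None \<Rightarrow> \<eta>' v = \<eta> v
          | Some S \<Rightarrow> (if S = {} then \<eta>' v = None else (\<exists>c\<in>S. \<eta>' v = Some c))"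
    using vf unfolding valid_firing_def by auto
  note bf = basic_facts[OF dw tT]
  have M1: "\<And>p. M p \<le> 1" using ns by (simp add: net_state_def)
  define \<sigma> where "\<sigma> v = (case \<eta>' v of Some c \<Rightarrow> Val c | None \<Rightarrow> Null)" for v
  define a where "a = ground (alpha W t) \<sigma>"
  have wrS: "[\<sigma> v] \<in> rigid W (RWr t v) \<and> \<sigma> v \<in> Val ` ddm (dmod W) v \<union> {Null}"
    if vd: "v \<in> dom (wr W t)" for v
  proof -
    obtain S where S: "wr W t v = Some S" using vd by auto
    have Ssub: "S \<subseteq> ddm (dmod W) v" using dw S by (auto simp: daw_net_def)
    show ?thesis
    proof (cases "S = {}")
      case True
      then show ?thesis using wv[of v] S by (simp add: \<sigma>_def rigid_def)
    next
      case False
      then obtain c where "c \<in> S" "\<eta>' v = Some c" using wv[of v] S by auto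
      then show ?thesis using S False Ssub by (auto simp: \<sigma>_def rigid_def)
    qed
  qed
  have ga: "ground_action_of (alpha W t) a"
    unfolding ground_action_of_def a_def using wrS by (auto simp: alpha_def)
  have guard: "pholds (rigid W) (Psi W (M, \<eta>)) (enc_guard (gd W t))"
    using g bf(6) by (subst enc_guard_correct[where W=W]) (auto simp: Psi_def)
  have c2: "pholds (rigid W) (Psi W (M, \<eta>)) (subst_form \<sigma> (PConj (map (\<lambda>v. PRel (RWr t v) [PPar v]) (list_of (dom (wr W t))))))"
    using wrS list_of_set[OF bf(1)] apply (auto simp: subst_PConj pholds_PConj)
    subgoal for x y by (rule exI[of _ "[\<sigma> x]"]) auto
    done
  have c3: "pholds (rigid W) (Psi W (M, \<eta>)) (subst_form \<sigma> (PConj (map (\<lambda>p. PEq (PSv (SP p)) (PCst (Bool True))) (list_of (preset W t)))))"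
    using pre bf(3) list_of_set[OF bf(2)] by (auto simp: subst_PConj pholds_PConj Psi_def)
  have prea: "pholds (rigid W) (Psi W (M, \<eta>)) (g_pre a)"
    using guard c2 c3 by (simp add: a_def ground_def alpha_def subst_enc_guard)
  have eq: "(\<lambda>x. case g_eff a x of Some z \<Rightarrow> peval (Psi W (M, \<eta>)) z | None \<Rightarrow> Psi W (M, \<eta>) x) = Psi W (M', \<eta>')"
  proof
    fix x
    show "(case g_eff a x of Some z \<Rightarrow> peval (Psi W (M, \<eta>)) z | None \<Rightarrow> Psi W (M, \<eta>) x) = Psi W (M', \<eta>') x"
    proof (cases x)
      case (SV v)
      show ?thesis
      proof (cases "v \<in> dom (wr W t)")
        case True
        then show ?thesis using SV bf(5) by (auto simp: a_def ground_def alpha_def Psi_def \<sigma>_def)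
      next
        case False
        then have "\<eta>' v = \<eta> v" using wv[of v] by (auto split: option.splits)
        then show ?thesis using SV False by (auto simp: a_def ground_def alpha_def Psi_def)
      qed
    next
      case (SP p)
      show ?thesis
      proof (cases "p \<in> postset W t")
        case True
        then have "M' p > 0" using mk[of p] pre by auto
        then show ?thesis using SP True bf(4) by (auto simp: a_def ground_def alpha_def Psi_def)
      next
        case F: False
        show ?thesis
        proof (cases "p \<in> preset W t")
          case True
          then have "M' p = 0" using mk[of p] pre F M1[of p] by auto
          then show ?thesis using SP True F bf(3) by (auto simp: a_def ground_def alpha_def Psi_def)
        next
          case False
          then have "M' p = M p" using mk[of p] F by auto
          then show ?thesis using SP False F by (auto simp: a_def ground_def alpha_def Psi_def)
        qed
      qed
    qed
  qed
  show ?thesis using ga prea eq by (auto simp: gamma_def)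
qed

lemma part2:
  assumes dw: "daw_net W" and os: "one_safe W" and ps: "planning_state W s"
    and re: "reachable W (Psi_inv s)" and tT: "t \<in> trans W"
    and ga: "ground_action_of (alpha W t) a" and gm: "gamma (rigid W) s a = Some s'"
  shows "valid_firing W (Psi_inv s) t (Psi_inv s')"
proof -
  note bf = basic_facts[OF dw tT]
  obtain \<sigma> where a: "a = ground (alpha W t) \<sigma>" using ga by (auto simp: ground_action_of_def)
  have pa: "pholds (rigid W) s (g_pre a)" and s': "s' = (\<lambda>x. case g_eff a x of Some z \<Rightarrow> peval s z | None \<Rightarrow> s x)"
    using gm by (auto simp: gamma_def split: if_splits)
  have pg: "pholds (rigid W) s (enc_guard (gd W t))"
    and p2: "pholds (rigid W) s (PConj (map (subst_form \<sigma>) (map (\<lambda>v. PRel (RWr t v) [PPar v]) (list_of (dom (wr W t))))))"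
    and p3: "pholds (rigid W) s (PConj (map (subst_form \<sigma>) (map (\<lambda>p. PEq (PSv (SP p)) (PCst (Bool True))) (list_of (preset W t)))))"
    using pa by (auto simp: a ground_def alpha_def subst_enc_guard subst_PConj)
  have wrS: "[\<sigma> v] \<in> rigid W (RWr t v)" if vd: "v \<in> dom (wr W t)" for v
  proof -
    have "pholds (rigid W) s (PRel (RWr t v) [PCst (\<sigma> v)])"
      using p2 vd list_of_set[OF bf(1)] by (auto simp: pholds_PConj)
    then show ?thesis by auto
  qed
  have preT: "s (SP p) = Some (Bool True)" if "p \<in> preset W t" for p
    using p3 that list_of_set[OF bf(2)] by (auto simp: pholds_PConj)
  define M where "M = fst (Psi_inv s)"
  define \<eta> where "\<eta> = snd (Psi_inv s)"
  define M' where "M' = fst (Psi_inv s')"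
  define \<eta>' where "\<eta>' = snd (Psi_inv s')"
  have PI: "Psi_inv s = (M, \<eta>)" "Psi_inv s' = (M', \<eta>')" by (simp_all add: M_def \<eta>_def M'_def \<eta>'_def)
  have Mv: "M p = (if s (SP p) = Some (Bool True) then 1 else 0)" for p by (simp add: M_def Psi_inv_def)
  have M'v: "M' p = (if s' (SP p) = Some (Bool True) then 1 else 0)" for p by (simp add: M'_def Psi_inv_def)
  have ev: "\<eta> v = (case s (SV v) of Some (Val c) \<Rightarrow> Some c | _ \<Rightarrow> None)" for v by (simp add: \<eta>_def Psi_inv_def)
  have e'v: "\<eta>' v = (case s' (SV v) of Some (Val c) \<Rightarrow> Some c | _ \<Rightarrow> None)" for v by (simp add: \<eta>'_def Psi_inv_def)
  have gh: "gholds (dmod W) \<eta> (gd W t)"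
  proof -
    have "\<forall>v\<in>gvars (gd W t). s (SV v) = Some (case \<eta> v of Some c \<Rightarrow> Val c | None \<Rightarrow> Null)"
    proof
      fix v assume "v \<in> gvars (gd W t)"
      then have "v \<in> netvars W" using bf(6) by auto
      then obtain x where "x \<in> Val ` ddm (dmod W) v \<union> {Null}" "s (SV v) = Some x"
        using ps unfolding planning_state_def by blast
      then show "s (SV v) = Some (case \<eta> v of Some c \<Rightarrow> Val c | None \<Rightarrow> Null)"
        by (auto simp: ev)
    qed
    then show ?thesis using pg enc_guard_correct[where W=W and I="rigid W"] by auto
  qed
  have Mpre: "preset W t \<subseteq> {p. M p > 0}" using preT by (auto simp: Mv)
  have wv: "\<And>v. case wr W t v of
            None \<Rightarrow> \<eta>' v = \<eta> v
          | Some S \<Rightarrow> (if S = {} then \<eta>' v = None else (\<exists>c\<in>S. \<eta>' v = Some c))"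
  proof -
    fix v
    show "case wr W t v of
            None \<Rightarrow> \<eta>' v = \<eta> v
          | Some S \<Rightarrow> (if S = {} then \<eta>' v = None else (\<exists>c\<in>S. \<eta>' v = Some c))"
    proof (cases "wr W t v")
      case None
      then have "s' (SV v) = s (SV v)" by (auto simp: s' a ground_def alpha_def)
      then show ?thesis using None by (simp add: ev e'v)
    next
      case (Some S)
      then have sv: "s' (SV v) = Some (\<sigma> v)" by (auto simp: s' a ground_def alpha_def)
      have "[\<sigma> v] \<in> rigid W (RWr t v)" using wrS Some by auto
      then show ?thesis using Some sv by (auto simp: rigid_def e'v split: if_splits)
    qed
  qed
  define M'' where "M'' p = (if p \<in> preset W t - postset W t then M p - 1
                  else if p \<in> postset W t - preset W t then M p + 1 else M p)" for p
  have vf: "valid_firing W (M, \<eta>) t (M'', \<eta>')"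
    unfolding valid_firing_def using tT Mpre gh wv by (simp add: M''_def)
  have "reachable W (M'', \<eta>')" using re vf PI unfolding reachable_def
    by (metis (mono_tags, lifting) rtranclp.rtrancl_into_rtrancl)
  then have M''1: "M'' p \<le> 1" for p using os by (auto simp: one_safe_def)
  have "M' = M''"
  proof
    fix p
    show "M' p = M'' p"
    proof (cases "p \<in> postset W t")
      case True
      then have "s' (SP p) = Some (Bool True)" by (auto simp: s' a ground_def alpha_def)
      then show ?thesis using M''1[of p] True preT[of p] by (auto simp: M'v M''_def Mv split: if_splits)
    next
      case F: False
      show ?thesis
      proof (cases "p \<in> preset W t")
        case True
        then have "s' (SP p) = Some (Bool False)" using F by (auto simp: s' a ground_def alpha_def)
        then show ?thesis using True F preT[of p] by (auto simp: M'v M''_def Mv)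
      next
        case False
        then have "s' (SP p) = s (SP p)" using F by (auto simp: s' a ground_def alpha_def)
        then show ?thesis using False F by (auto simp: M'v M''_def Mv)
      qed
    qed
  qed
  then show ?thesis using vf PI by simp
qed

theorem mainTheorem8:
  fixes W :: "('v,'c,'p,'t) dawnet"
  assumes "daw_net W" and "one_safe W"
  shows "(\<forall>st t st'. net_state W st \<and> valid_firing W st t st' \<longrightarrow>
            (\<exists>a. ground_action_of (alpha W t) a \<and> gamma (rigid W) (Psi W st) a = Some (Psi W st')))
       \<and> (\<forall>s t a s'. planning_state W s \<and> reachable W (Psi_inv s) \<and> t \<in> trans W \<and>
            ground_action_of (alpha W t) a \<and> gamma (rigid W) s a = Some s' \<longrightarrow>
            valid_firing W (Psi_inv s) t (Psi_inv s'))"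
  using part1[OF assms(1)] part2[OF assms] by auto

end
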